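(* Let the sequence $\gamma(0),\gamma(1),\dots$ be defined by $\gamma(0)=0$ and recursively $$\gamma(2^l-k)=\frac{2^l+2(-1)^l}{3}-k+2\gamma(k)\qquad (l\ge 0,\ 0\le k\le 2^{l-1}).$$ For a positive integer $n$ let $b(n)$ be the number of maximal blocks of consecutive ones in the binary representation of $n$, and $b(0)=0$. Then: (i) $\gamma(2^l+k)=\frac{2^l+2(-1)^l}{3}-k+4\gamma(k)$ for all integers $l\ge0$ and $0\le k\le 2^{l-1}$; (ii) $\gamma(2^l-k)=\gamma(k)+2\gamma(2^{l-1}-k)$ for all integers $l\ge 0$ and integers $k$ with $2^{l-2}\le k\le 2^{l-1}$; (iii) $\gamma(2^l+k)=1+\gamma(2^l+k-1)+2\gamma(2^l-k)-2\gamma(2^l+1-k)$ for all integers $l\ge0$ and $1\le k\le 2^l$; (iv) for all $n\in\mathbf{N}$, $\gamma(2n)=n-\gamma(n)$ and $\gamma(2n+1)=\gamma(2n)+(2^{1+2b(n)}+1)/3=n-\gamma(n)+(2^{1+2b(n)}+1)/3$; and for all $n\ge1$, $\gamma(2n-1)=\gamma(2n)+(4^{b(2n-1)}-1)/3=n-\gamma(n)+(4^{b(2n-1)}-1)/3$.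
   Context: For example $667=(1010011011)_2$ has $b(667)=4$. Equivalently $b$ satisfies $b(0)=0$, $b(2n)=b(n)$, $b(2n+1)=b(n)+1-(n\bmod 2)$. *)

theory Defs
  imports Complex_Main
begin

text \<open>Number of maximal blocks of consecutive ones in the binary representation of n:
  each maximal block is identified by its most significant position i, i.e. bit i of n is 1
  and bit i+1 of n is 0.  For n = 0 this gives 0.\<close>
definition blocks :: "nat \<Rightarrow> nat" where
  "blocks n = card {i. bit n i \<and> \<not> bit n (Suc i)}"

end

theory Submission imports Defs begin
lemma blocks_fin: "finite {i. bit (m::nat) i \<and> \<not> bit m (Suc i)}"
proof (rule finite_subset[of _ "{..<m}"])
  show "{i. bit m i \<and> \<not> bit m (Suc i)} \<subseteq> {..<m}"
  proof
    fix i assume "i \<in> {i. bit m i \<and> \<not> bit m (Suc i)}"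
    then have "bit m i" by simp
    show "i \<in> {..<m}"
    proof (rule ccontr)
      assume "i \<notin> {..<m}"
      then have "m \<le> i" by simp then have "m < 2^i" using less_exp[of i] by linarith
      then have "m div 2^i = 0" by simp
      with \<open>bit m i\<close> show False by (simp add: bit_iff_odd)
    qed
  qed
qed simp

lemma blocks_step: "blocks m = blocks (m div 2) + (if odd m \<and> even (m div 2) then 1 else 0)"
proof -
  let ?S = "\<lambda>m::nat. {i. bit m i \<and> \<not> bit m (Suc i)}"
  have eq: "?S m = Suc ` ?S (m div 2) \<union> (if odd m \<and> even (m div 2) then {0} else {})"
  proof (rule set_eqI)
    fix i show "i \<in> ?S m \<longleftrightarrow> i \<in> Suc ` ?S (m div 2) \<union> (if odd m \<and> even (m div 2) then {0} else {})"
      by (cases i) (auto simp: bit_Suc bit_0)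
  qed
  have "card (?S m) = card (Suc ` ?S (m div 2)) + card (if odd m \<and> even (m div 2) then {0::nat} else {})"
    unfolding eq by (rule card_Un_disjoint) (auto simp: blocks_fin)
  also have "card (Suc ` ?S (m div 2)) = card (?S (m div 2))" by (simp add: card_image)
  finally show ?thesis unfolding blocks_def by simp
qed

lemma blocks0: "blocks 0 = 0" unfolding blocks_def by simp
lemma blocks_even: "blocks (2*n) = blocks n" using blocks_step[of "2*n"] by simp
lemma blocks_odd: "blocks (2*n+1) = blocks n + (if even n then 1 else 0)" using blocks_step[of "2*n+1"] by simp

lemma blocks_comp: "k < 2^m \<Longrightarrow> blocks (2^(Suc m) - 1 - k) = blocks k + (if even k then 1 else 0)"
proof (induction m arbitrary: k)
  case 0
  then have "k = 0" by simp
  then show ?case using blocks_odd[of 0] blocks0 by simp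
next
  case (Suc m)
  define j where "j = k div 2"
  have j: "j < 2^m" using Suc.prems unfolding j_def by simp
  define c where "c = 2^(Suc m) - 1 - j"
  have IH: "blocks c = blocks j + (if even j then 1 else 0)" using Suc.IH[OF j] unfolding c_def .
  have pc: "odd c \<longleftrightarrow> even j" unfolding c_def using j by (simp add: even_diff_nat)
  show ?case
  proof (cases "even k")
    case True
    then have k: "k = 2*j" unfolding j_def by simp
    have "2^(Suc (Suc m)) - 1 - k = 2*c+1" unfolding c_def k using j by simp
    then show ?thesis using IH pc blocks_odd[of c] k blocks_even[of j] by auto
  next
    case False
    then have k: "k = 2*j+1" unfolding j_def by simp
    have "2^(Suc (Suc m)) - 1 - k = 2*c" unfolding c_def k using j by simp
    then show ?thesis using IH blocks_even[of c] k blocks_odd[of j] by auto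
  qed
qed

lemma blocks_top: "2*j < 2^m \<Longrightarrow> blocks (2^m + j) = blocks j + 1"
proof (induction m arbitrary: j)
  case 0
  then have "j = 0" by simp
  then show ?case using blocks_odd[of 0] blocks0 by simp
next
  case (Suc m)
  define i where "i = j div 2"
  show ?case
  proof (cases "even j")
    case True
    then have j: "j = 2*i" unfolding i_def by simp
    have "2*i < 2^m" using Suc.prems j by simp
    then have "blocks (2^m+i) = blocks i + 1" by (rule Suc.IH)
    moreover have "2^(Suc m) + j = 2*(2^m+i)" using j by simp
    ultimately show ?thesis using blocks_even[of "2^m+i"] blocks_even[of i] j by simp
  next
    case False
    then have j: "j = 2*i+1" unfolding i_def by simp
    have "2*i < 2^m" using Suc.prems j by simp
    then have h: "blocks (2^m+i) = blocks i + 1" by (rule Suc.IH)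
    have m: "m \<noteq> 0" using Suc.prems j by (cases m) auto
    have p: "even (2^m+i) \<longleftrightarrow> even i" using m by simp
    have "2^(Suc m) + j = 2*(2^m+i)+1" using j by simp
    then show ?thesis using blocks_odd[of "2^m+i"] blocks_odd[of i] h p j by simp
  qed
qed

definition BB :: "nat \<Rightarrow> real" where "BB n = 4 ^ blocks n"
definition EE :: "nat \<Rightarrow> real" where
  "EE J = (if even J then (1 + 2 * BB (J div 2)) / 3 else (1 - BB J) / 3)"
definition AA :: "nat \<Rightarrow> real" where "AA l = (2 ^ l + 2 * (-1) ^ l) / 3"

lemma AA_sum: "AA (Suc m) + AA m = 2 ^ m"
  unfolding AA_def by (simp add: field_simps)

lemma EE_sum: "EE (2*J) + EE (2*J+1) + EE J = 1"
proof (cases "even J")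
  case True
  then obtain i where J: "J = 2*i" by blast
  have "BB (2*J+1) = 4 * BB J" unfolding BB_def using blocks_odd[of J] True by simp
  moreover have "BB i = BB J" unfolding BB_def J using blocks_even[of i] by simp
  ultimately show ?thesis unfolding EE_def using J by (simp add: field_simps)
next
  case False
  have "BB (2*J+1) = BB J" unfolding BB_def using blocks_odd[of J] False by simp
  then show ?thesis unfolding EE_def using False by (simp add: field_simps)
qed

lemma EE_comp: "k < 2^m \<Longrightarrow> EE (2^(Suc m) - 1 - k) = 1 - 2 * EE k"
proof -
  assume k: "k < 2^m"
  have b: "blocks (2^(Suc m) - 1 - k) = blocks k + (if even k then 1 else 0)" by (rule blocks_comp[OF k])
  have p: "even (2^(Suc m) - 1 - k) \<longleftrightarrow> odd k" using k by (simp add: even_diff_nat)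
  show ?thesis
  proof (cases "even k")
    case True
    then obtain i where ki: "k = 2*i" by blast
    have "BB (2^(Suc m) - 1 - k) = 4 * BB k" unfolding BB_def using b True by simp
    moreover have "BB i = BB k" unfolding BB_def ki using blocks_even[of i] by simp
    ultimately show ?thesis unfolding EE_def using True p ki by (simp add: field_simps)
  next
    case False
    define c where "c = 2^(Suc m) - 1 - k"
    have ec: "even c" using p False unfolding c_def by simp
    then obtain i where ci: "c = 2*i" by blast
    have "BB c = BB k" unfolding BB_def c_def using b False by simp
    moreover have "BB i = BB c" unfolding BB_def ci using blocks_even[of i] by simp
    ultimately show ?thesis unfolding EE_def using False p ci unfolding c_def[symmetric] by (simp add: field_simps)
  qed
qed

lemma exists_m: "2 \<le> (x::nat) \<Longrightarrow> \<exists>m\<ge>1. 2^(m-1) < x \<and> x \<le> 2^m"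
proof (induction x rule: dec_induct)
  case base
  show ?case by (rule exI[of _ 1]) simp
next
  case (step x)
  then obtain m where m: "m \<ge> 1" "2^(m-1) < x" "x \<le> 2^m" by blast
  show ?case
  proof (cases "Suc x \<le> 2^m")
    case True then show ?thesis using m by auto
  next
    case False
    then have "x = 2^m" using m by simp
    then show ?thesis by (intro exI[of _ "Suc m"]) simp
  qed
qed

lemma mainR:
  fixes g :: "nat \<Rightarrow> real"
  assumes g0: "g 0 = 0"
    and grec: "\<And>l k. 2 * k \<le> 2 ^ l \<Longrightarrow>
      g (2 ^ l - k) = (2 ^ l + 2 * (-1) ^ l) / 3 - real k + 2 * g k"
  shows "g (2*n) = real n - g n \<and> g (2*n+1) - g (2*n) = EE (2*n) \<and> g (2*n+2) - g (2*n+1) = EE (2*n+1)"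
proof (induction n rule: less_induct)
  case (less n)
  have gr: "g (2^l - k) = AA l - real k + 2 * g k" if "2 * k \<le> 2^l" for l k
    using grec[OF that] unfolding AA_def .
  show ?case
  proof (cases "n = 0")
    case True
    have g1: "g 1 = 1" using gr[of 0 0] g0 by (simp add: AA_def)
    have g2: "g 2 = 0" using gr[of 0 1] g0 by (simp add: AA_def)
    have g2': "g (Suc (Suc 0)) = 0" using g2 by (simp add: numeral_2_eq_2)
    show ?thesis using True g0 g1 g2' by (simp add: EE_def BB_def blocks0 blocks_odd[of 0, simplified])
  next
    case False
    then obtain m where m: "m \<ge> 1" "2^(m-1) < n+1" "n+1 \<le> 2^m" using exists_m[of "n+1"] by auto
    define J where "J = 2^m - n - 1"
    define l where "l = Suc m"
    have pm: "(2::nat)^m = 2 * 2^(m-1)" using m(1) by (cases m) auto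
    have J2: "2*J + 2 \<le> 2^m" unfolding J_def using m pm by linarith
    have Jn: "J < n" unfolding J_def using m pm by linarith
    have pl: "(2::nat)^l = 2 * 2^m" unfolding l_def by simp
    have e1: "g (2*n+2) = AA l - real (2*J) + 2 * g (2*J)"
    proof -
      have "2^l - 2*J = 2*n+2" unfolding J_def pl using m by simp
      then show ?thesis using gr[of "2*J" l] pl J2 by simp
    qed
    have e2: "g (2*n+1) = AA l - real (2*J+1) + 2 * g (2*J+1)"
    proof -
      have "2^l - (2*J+1) = 2*n+1" unfolding J_def pl using m by simp
      then show ?thesis using gr[of "2*J+1" l] pl J2 by simp
    qed
    have e3: "g (2*n) = AA l - real (2*J+2) + 2 * g (2*J+2)"
    proof -
      have "2^l - (2*J+2) = 2*n" unfolding J_def pl using m by simp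
      then show ?thesis using gr[of "2*J+2" l] pl J2 by simp
    qed
    have e4: "g n = AA m - real (J+1) + 2 * g (J+1)"
    proof -
      have "2^m - (J+1) = n" unfolding J_def using m by simp
      then show ?thesis using gr[of "J+1" m] J2 by simp
    qed
    have rn: "real n = 2^m - real J - 1" unfolding J_def using m
      by (simp add: of_nat_diff)
    have IH: "g (2*J) = real J - g J" "g (2*J+1) - g (2*J) = EE (2*J)" "g (2*J+2) - g (2*J+1) = EE (2*J+1)"
      using less.IH[OF Jn] by auto
    have DJ: "g (J+1) - g J = EE J"
    proof (cases "even J")
      case True
      then obtain i where i: "J = 2*i" by blast
      have "i < n" using Jn i by simp
      then show ?thesis using less.IH[of i] i by simp
    next
      case False
      then obtain i where i: "J = 2*i+1" using oddE by blast
      have "i < n" using Jn i by simp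
      then show ?thesis using less.IH[of i] i by (simp add: add.assoc)
    qed
    have S: "EE (2*J) + EE (2*J+1) + EE J = 1" by (rule EE_sum)
    have A: "AA l + AA m = 2^m" unfolding l_def by (rule AA_sum)
    have C1: "EE (2*n) = 1 - 2 * EE (2*J+1)"
    proof -
      have "2*J+1 < 2^m" using J2 by simp
      moreover have "2^(Suc m) - 1 - (2*J+1) = 2*n" unfolding J_def using m by simp
      ultimately show ?thesis using EE_comp[of "2*J+1" m] by simp
    qed
    have C2: "EE (2*n+1) = 1 - 2 * EE (2*J)"
    proof -
      have "2*J < 2^m" using J2 by simp
      moreover have "2^(Suc m) - 1 - 2*J = 2*n+1" unfolding J_def using m by simp
      ultimately show ?thesis using EE_comp[of "2*J" m] by simp
    qed
    show ?thesis using e1 e2 e3 e4 rn IH DJ S A C1 C2 by simp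
  qed
qed

lemma partI:
  fixes g :: "nat \<Rightarrow> real"
  assumes g0: "g 0 = 0"
    and grec: "\<And>l k. 2 * k \<le> 2 ^ l \<Longrightarrow>
      g (2 ^ l - k) = (2 ^ l + 2 * (-1) ^ l) / 3 - real k + 2 * g k"
  shows "2 * k \<le> 2^l \<Longrightarrow> g (2^l + k) = AA l - real k + 4 * g k"
proof (induction l arbitrary: k)
  case 0
  then have k: "k = 0" by simp
  have "g 1 = 1" using grec[of 0 0] g0 by simp
  then show ?case using k g0 by (simp add: AA_def)
next
  case (Suc l)
  note R = mainR[OF g0 grec]
  define j where "j = k div 2"
  have A: "AA (Suc l) + AA l = 2^l" by (rule AA_sum)
  show ?case
  proof (cases "even k")
    case True
    then have k: "k = 2*j" unfolding j_def by simp
    have h: "2*j \<le> 2^l" using Suc.prems k by simp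
    have i1: "g (2^l+j) = AA l - real j + 4 * g j" by (rule Suc.IH[OF h])
    have "g (2^(Suc l) + k) = g (2*(2^l+j))" using k by simp
    also have "\<dots> = real (2^l+j) - g (2^l+j)" using R[of "2^l+j"] by simp
    finally show ?thesis using i1 R[of j] A k by simp
  next
    case False
    then have k: "k = 2*j+1" unfolding j_def by simp
    have h: "2*j < 2^l" using Suc.prems k by simp
    have i1: "g (2^l+j) = AA l - real j + 4 * g j" using Suc.IH h by simp
    have bt: "BB (2^l+j) = 4 * BB j" unfolding BB_def using blocks_top[OF h] by simp
    have "g (2^(Suc l) + k) = g (2*(2^l+j)+1)" using k by simp
    also have "\<dots> = real (2^l+j) - g (2^l+j) + EE (2*(2^l+j))" using R[of "2^l+j"] by simp
    finally show ?thesis using i1 R[of j] A k bt by (simp add: EE_def field_simps)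
  qed
qed
theorem theorem1p5:
  fixes g :: "nat \<Rightarrow> real"
  assumes g0: "g 0 = 0"
    and grec: "\<And>l k. 2 * k \<le> 2 ^ l \<Longrightarrow>
      g (2 ^ l - k) = (2 ^ l + 2 * (-1) ^ l) / 3 - real k + 2 * g k"
  shows "(\<forall>l k. 2 * k \<le> 2 ^ l \<longrightarrow>
            g (2 ^ l + k) = (2 ^ l + 2 * (-1) ^ l) / 3 - real k + 4 * g k)
       \<and> (\<forall>l k. 2 ^ l \<le> 4 * k \<and> 2 * k \<le> 2 ^ l \<longrightarrow>
            g (2 ^ l - k) = g k + 2 * g (2 ^ (l - 1) - k))
       \<and> (\<forall>l k. 1 \<le> k \<and> k \<le> 2 ^ l \<longrightarrow>
            g (2 ^ l + k) = 1 + g (2 ^ l + k - 1) + 2 * g (2 ^ l - k) - 2 * g (2 ^ l + 1 - k))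
       \<and> (\<forall>n. g (2 * n) = real n - g n
            \<and> g (2 * n + 1) = g (2 * n) + (2 ^ (1 + 2 * blocks n) + 1) / 3
            \<and> g (2 * n + 1) = real n - g n + (2 ^ (1 + 2 * blocks n) + 1) / 3)
       \<and> (\<forall>n\<ge>1. g (2 * n - 1) = g (2 * n) + (4 ^ blocks (2 * n - 1) - 1) / 3
            \<and> g (2 * n - 1) = real n - g n + (4 ^ blocks (2 * n - 1) - 1) / 3)"
proof -
  note R = mainR[OF g0 grec]
  note I = partI[OF g0 grec]
  have gr: "g (2^l - k) = AA l - real k + 2 * g k" if "2 * k \<le> 2^l" for l k
    using grec[OF that] unfolding AA_def .
  have P1: "\<forall>l k. 2 * k \<le> 2 ^ l \<longrightarrow>
            g (2 ^ l + k) = (2 ^ l + 2 * (-1) ^ l) / 3 - real k + 4 * g k"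
    using I unfolding AA_def by blast
  have P2: "\<forall>l k. 2 ^ l \<le> 4 * k \<and> 2 * k \<le> 2 ^ l \<longrightarrow>
            g (2 ^ l - k) = g k + 2 * g (2 ^ (l - 1) - k)"
  proof (intro allI impI)
    fix l k :: nat assume h: "2 ^ l \<le> 4 * k \<and> 2 * k \<le> 2 ^ l"
    have l0: "l \<noteq> 0"
    proof
      assume "l = 0"
      with h have "k = 0" "1 \<le> 4*k" by auto
      then show False by simp
    qed
    then obtain m where l: "l = Suc m" by (cases l) auto
    define j where "j = 2^m - k"
    have hj: "2 * j \<le> 2^m" unfolding j_def using h l by (simp add: diff_mult_distrib2) linarith
    have kj: "k = 2^m - j" "2*k \<le> 2^l" unfolding j_def using h l by auto
    have e1: "g (2^l - k) = AA l - real k + 2 * g k" by (rule gr[OF kj(2)])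
    have e2: "g k = AA m - real j + 2 * g j" using gr[OF hj] kj(1) by simp
    have rk: "real k = 2^m - real j" using kj(1) hj by (simp add: of_nat_diff)
    have A: "AA (Suc m) + AA m = 2^m" by (rule AA_sum)
    have "2^(l-1) - k = j" using l j_def kj(1) by simp
    then show "g (2 ^ l - k) = g k + 2 * g (2 ^ (l - 1) - k)" using e1 e2 rk A l by simp
  qed
  have P3: "\<forall>l k. 1 \<le> k \<and> k \<le> 2 ^ l \<longrightarrow>
            g (2 ^ l + k) = 1 + g (2 ^ l + k - 1) + 2 * g (2 ^ l - k) - 2 * g (2 ^ l + 1 - k)"
  proof (intro allI impI)
    fix l k :: nat assume h: "1 \<le> k \<and> k \<le> 2 ^ l"
    show "g (2 ^ l + k) = 1 + g (2 ^ l + k - 1) + 2 * g (2 ^ l - k) - 2 * g (2 ^ l + 1 - k)"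
    proof (cases "2 * k \<le> 2^l")
      case True
      have h2: "2 * (k-1) \<le> 2^l" using True by simp
      have a1: "g (2^l + k) = AA l - real k + 4 * g k" using partI[OF g0 grec True] .
      have a2: "g (2^l + (k-1)) = AA l - real (k-1) + 4 * g (k-1)" using partI[OF g0 grec h2] .
      have b1: "g (2^l - k) = AA l - real k + 2 * g k" by (rule gr[OF True])
      have b2: "g (2^l - (k-1)) = AA l - real (k-1) + 2 * g (k-1)" by (rule gr[OF h2])
      have q1: "2^l + k - 1 = 2^l + (k-1)" "2^l + 1 - k = 2^l - (k-1)" using h by auto
      have rk: "real (k-1) = real k - 1" using h by (simp add: of_nat_diff)
      show ?thesis unfolding q1 using a1 a2 b1 b2 rk by simp
    next
      case False
      define k' where "k' = 2^l - k"
      have hk: "2 * k' < 2^l" "2 * (k'+1) \<le> 2^(Suc l)" "2*k' \<le> 2^(Suc l)" unfolding k'_def using False h by auto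
      have q: "2^l + k = 2^(Suc l) - k'" "2^l + k - 1 = 2^(Suc l) - (k'+1)"
              "2^l - k = k'" "2^l + 1 - k = k'+1" unfolding k'_def using False h by auto
      have a1: "g (2^(Suc l) - k') = AA (Suc l) - real k' + 2 * g k'" by (rule gr[OF hk(3)])
      have a2: "g (2^(Suc l) - (k'+1)) = AA (Suc l) - real (k'+1) + 2 * g (k'+1)" by (rule gr[OF hk(2)])
      show ?thesis unfolding q using a1 a2 by simp
    qed
  qed
  have pw: "(2::real) ^ (1 + 2 * b) = 2 * 4 ^ b" for b :: nat
    by (simp add: power_add power_mult)
  have P4: "\<forall>n. g (2 * n) = real n - g n
            \<and> g (2 * n + 1) = g (2 * n) + (2 ^ (1 + 2 * blocks n) + 1) / 3
            \<and> g (2 * n + 1) = real n - g n + (2 ^ (1 + 2 * blocks n) + 1) / 3"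
  proof
    fix n
    have E: "EE (2*n) = (2 ^ (1 + 2 * blocks n) + 1) / 3" unfolding EE_def BB_def pw by simp
    have r: "g (2*n) = real n - g n" "g (2*n+1) - g (2*n) = EE (2*n)" using R[of n] by auto
    show "g (2 * n) = real n - g n
            \<and> g (2 * n + 1) = g (2 * n) + (2 ^ (1 + 2 * blocks n) + 1) / 3
            \<and> g (2 * n + 1) = real n - g n + (2 ^ (1 + 2 * blocks n) + 1) / 3"
      using r E by linarith
  qed
  have P5: "\<forall>n\<ge>1. g (2 * n - 1) = g (2 * n) + (4 ^ blocks (2 * n - 1) - 1) / 3
            \<and> g (2 * n - 1) = real n - g n + (4 ^ blocks (2 * n - 1) - 1) / 3"
  proof (intro allI impI)
    fix n :: nat assume "n \<ge> 1"
    then obtain p where p: "n = Suc p" by (cases n) auto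
    have q: "2*n - 1 = 2*p+1" "2*n = 2*p+2" using p by auto
    have "EE (2*p+1) = (1 - 4 ^ blocks (2 * n - 1)) / 3" unfolding EE_def BB_def q by simp
    then show "g (2 * n - 1) = g (2 * n) + (4 ^ blocks (2 * n - 1) - 1) / 3
            \<and> g (2 * n - 1) = real n - g n + (4 ^ blocks (2 * n - 1) - 1) / 3"
      using R[of p] R[of n] unfolding q by (simp add: field_simps)
  qed
  show ?thesis using P1 P2 P3 P4 P5 by blast
qed

end
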